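(* Suppose Assumption (A) holds and, for sufficiently large $m$ and conditionally on the fitted function $\tilde\mu_m$, the joint density $b_m(x,u)$ of $(\mu(Z),\eta_m(Z))$ and its partial derivatives $\partial_xb_m(x,u)$, $\partial_x^2b_m(x,u)$ exist for all $x,u$, and there exist nonnegative functions $\bar b_{m,0},\bar b_{m,1},\bar b_{m,2}$ with \[ b_m(x,u)\le\bar b_{m,0}(u),\quad|\partial_xb_m(x,u)|\le\bar b_{m,1}(u),\quad|\partial_x^2b_m(x,u)|\le\bar b_{m,2}(u) \] for all $x,u$, and $B_{r,i}:=\sup_m\int_{\mathbb{R}}|u|^r\bar b_{m,i}(u)\,du<\infty$ for $r=0,1,2,3$ and $i=0,1,2$. Then for any sequence $\{x_m\}$ with $x_m\to x$ as $m\to\infty$, $f_{\tilde\mu_m}(x_m)\to f_\mu(x)$ and $f'_{\tilde\mu_m}(x_m)\to f'_\mu(x)$ almost surely as $m\to\infty$.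
   Context: Let $Z$ be a random vector with values in $\Omega\subseteq\mathbb{R}^d$ and distribution $P$; $\mu,\pi:\Omega\to\mathbb{R}$ measurable. For each $m$, $\tilde\mu_m,\tilde\pi_m:\Omega\to\mathbb{R}$ are random functions (fitted from a sample independent of $Z$); $\Pr_m$ is probability conditional on them, under which $Z\sim P$. $f_\mu$ is the density of $\mu(Z)$; $F_{\tilde\mu_m}(x)=\Pr_m\{\tilde\mu_m(Z)\le x\}$ and $f_{\tilde\mu_m}=\frac{d}{dx}F_{\tilde\mu_m}$. $\|g\|_\infty$ is the $P$-essential supremum of $|g|$ on $\Omega$. Assumption (A): there is a deterministic sequence $a_m\to0$ such that for sufficiently large $m$, $\|\tilde\mu_m-\mu\|_\infty=\mathcal{O}_{\rm P}(a_m)$ and $\|\tilde\pi_m-\pi\|_\infty=\mathcal{O}_{\rm P}(a_m)$. $\eta_m=a_m^{-1}(\tilde\mu_m-\mu)$. *)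

theory Defs
  imports "HOL-Probability.Probability"
begin

definition sup_norm :: "'a measure \<Rightarrow> ('a \<Rightarrow> real) \<Rightarrow> ereal" where
  "sup_norm P g = esssup P (\<lambda>z. ereal \<bar>g z\<bar>)"

text \<open>Stochastic boundedness X m = O_P(a m) w.r.t. the outer probability of M:
  for every eps > 0 there are K and m0 such that for all m >= m0 the event
  X m > K * a m is contained in a measurable event of probability at most eps.\<close>
definition bigO_P :: "'w measure \<Rightarrow> (nat \<Rightarrow> 'w \<Rightarrow> ereal) \<Rightarrow> (nat \<Rightarrow> real) \<Rightarrow> bool" where
  "bigO_P M X a \<longleftrightarrow>
     (\<forall>\<epsilon>>0. \<exists>K m0. \<forall>m\<ge>m0. \<exists>A\<in>sets M.
        {\<omega>\<in>space M. X m \<omega> > ereal (K * a m)} \<subseteq> A \<and> measure M A \<le> \<epsilon>)"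

definition cdf_of :: "'a measure \<Rightarrow> ('a \<Rightarrow> real) \<Rightarrow> real \<Rightarrow> real" where
  "cdf_of P g t = measure P {z \<in> space P. g z \<le> t}"

definition dens_of :: "'a measure \<Rightarrow> ('a \<Rightarrow> real) \<Rightarrow> real \<Rightarrow> real" where
  "dens_of P g = deriv (cdf_of P g)"

definition dens_deriv :: "'a measure \<Rightarrow> ('a \<Rightarrow> real) \<Rightarrow> real \<Rightarrow> real" where
  "dens_deriv P g = deriv (dens_of P g)"

end

theory Submission
  imports Defs
begin


lemma mvt_bound:
  fixes phi phi' :: "real \<Rightarrow> real"
  assumes d: "\<And>s. (phi has_real_derivative phi' s) (at s)" and bd: "\<And>s. \<bar>phi' s\<bar> \<le> C"
  shows "\<bar>phi y - phi z\<bar> \<le> C * \<bar>y - z\<bar>"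
proof -
  have *: "\<bar>phi q - phi p\<bar> \<le> C * \<bar>q - p\<bar>" if pq: "p < q" for p q
  proof -
    obtain w where "phi q - phi p = (q - p) * phi' w" using MVT2[OF pq, of phi phi'] d by blast
    then have "\<bar>phi q - phi p\<bar> = \<bar>q - p\<bar> * \<bar>phi' w\<bar>" by (simp add: abs_mult)
    also have "\<dots> \<le> \<bar>q - p\<bar> * C" using bd by (intro mult_left_mono) auto
    finally show ?thesis by (simp add: mult.commute)
  qed
  consider "y < z" | "y = z" | "z < y" by linarith
  then show ?thesis
  proof cases
    case 1 then show ?thesis using *[OF 1] by (simp add: abs_minus_commute)
  next
    case 2 then show ?thesis by simp
  qed (use * in auto)
qed

lemma integrable_nn_bound:
  fixes f g :: "'a \<Rightarrow> real"
  assumes "f \<in> borel_measurable M" "\<And>u. \<bar>f u\<bar> \<le> g u" "(\<integral>\<^sup>+u. ennreal (g u) \<partial>M) < \<infinity>"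
  shows "integrable M f"
proof (rule integrableI_bounded)
  show "(\<integral>\<^sup>+ x. ennreal (norm (f x)) \<partial>M) < \<infinity>"
    using assms(2) by (intro le_less_trans[OF _ assms(3)] nn_integral_mono) (auto intro: ennreal_leI)
qed (use assms in auto)

lemma int_bound:
  fixes f g :: "'a \<Rightarrow> real"
  assumes fm: "f \<in> borel_measurable M" and bd: "\<And>u. \<bar>f u\<bar> \<le> K * g u" and K: "K \<ge> 0"
    and C: "(\<integral>\<^sup>+u. ennreal (g u) \<partial>M) \<le> ennreal C" "C \<ge> 0"
  shows "\<bar>integral\<^sup>L M f\<bar> \<le> K * C"
proof (cases "K = 0")
  case True
  then have "f = (\<lambda>_. 0)" using bd by (intro ext) (metis abs_le_zero_iff mult_zero_left)
  then show ?thesis using K C(2) by simp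
next
  case False
  then have Kp: "K > 0" using K by simp
  have b2: "\<bar>f u\<bar> / K \<le> g u" for u using bd[of u] Kp by (simp add: divide_le_eq mult.commute)
  have "(\<integral>\<^sup>+u. ennreal (\<bar>f u\<bar> / K) \<partial>M) \<le> ennreal C"
    by (rule order_trans[OF nn_integral_mono C(1)]) (use b2 in \<open>auto intro: ennreal_leI\<close>)
  moreover have "(\<integral>\<^sup>+u. ennreal (\<bar>f u\<bar> / K) \<partial>M) = ennreal (1/K) * (\<integral>\<^sup>+u. ennreal \<bar>f u\<bar> \<partial>M)"
    using Kp fm by (subst nn_integral_cmult[symmetric]) (auto simp: ennreal_mult[symmetric] intro!: nn_integral_cong)
  ultimately have "ennreal K * (ennreal (1/K) * (\<integral>\<^sup>+u. ennreal \<bar>f u\<bar> \<partial>M)) \<le> ennreal K * ennreal C"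
    by (intro mult_left_mono) auto
  moreover have "ennreal K * (ennreal (1/K) * X) = X" for X
    using Kp by (simp add: mult.assoc[symmetric] ennreal_mult[symmetric])
  ultimately have le: "(\<integral>\<^sup>+u. ennreal \<bar>f u\<bar> \<partial>M) \<le> ennreal (K * C)"
    using Kp C(2) by (simp add: ennreal_mult)
  have int: "integrable M f"
    by (rule integrableI_bounded) (use fm le in \<open>auto simp: top.not_eq_extremum intro: le_less_trans\<close>)
  have "\<bar>integral\<^sup>L M f\<bar> \<le> integral\<^sup>L M (\<lambda>u. \<bar>f u\<bar>)" by (rule integral_abs_bound)
  also have "ennreal (integral\<^sup>L M (\<lambda>u. \<bar>f u\<bar>)) = (\<integral>\<^sup>+u. ennreal \<bar>f u\<bar> \<partial>M)"
    using int by (subst nn_integral_eq_integral) auto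
  then have "integral\<^sup>L M (\<lambda>u. \<bar>f u\<bar>) \<le> K * C" using le Kp C(2)
    by (metis ennreal_le_iff mult_nonneg_nonneg order_less_le)
  finally show ?thesis .
qed



lemma deriv_seq:
  fixes f :: "real \<Rightarrow> real"
  assumes "(f has_real_derivative D) (at t)" "\<And>i. X i \<noteq> t" "X \<longlonglongrightarrow> t"
  shows "(\<lambda>i. (f (X i) - f t) / (X i - t)) \<longlonglongrightarrow> D"
proof -
  have "((\<lambda>y. (f y - f t) / (y - t)) \<longlongrightarrow> D) (at t)"
    using assms(1) by (simp add: has_field_derivative_iff)
  then show ?thesis using assms(2,3) unfolding tendsto_at_iff_sequentially by (auto simp: o_def)
qed

lemma dc_nn:
  fixes s :: "nat \<Rightarrow> 'a \<Rightarrow> real" and f g :: "'a \<Rightarrow> real"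
  assumes sm: "\<And>i. s i \<in> borel_measurable M" and lim: "\<And>u. (\<lambda>i. s i u) \<longlonglongrightarrow> f u"
    and bd: "\<And>i u. \<bar>s i u\<bar> \<le> g u" and fin: "(\<integral>\<^sup>+u. ennreal (g u) \<partial>M) < \<infinity>"
  shows "integrable M f" "(\<lambda>i. integral\<^sup>L M (s i)) \<longlonglongrightarrow> integral\<^sup>L M f"
proof -
  define W where "W u = (SUP i. ennreal \<bar>s i u\<bar>)" for u
  define w where "w u = enn2real (W u)" for u
  have Wm: "W \<in> borel_measurable M" unfolding W_def using sm by (intro borel_measurable_SUP) auto
  have wm: "w \<in> borel_measurable M" unfolding w_def using Wm by simp
  have Wg: "W u \<le> ennreal (g u)" for u unfolding W_def using bd by (auto intro!: SUP_least ennreal_leI)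
  have sw: "\<bar>s i u\<bar> \<le> w u" for i u
  proof -
    have "ennreal \<bar>s i u\<bar> \<le> W u" unfolding W_def by (rule SUP_upper) auto
    moreover have "W u < \<infinity>" using Wg[of u] by (simp add: le_less_trans)
    ultimately show ?thesis unfolding w_def
      using enn2real_mono by fastforce
  qed
  have fm: "f \<in> borel_measurable M" using lim sm by (rule borel_measurable_LIMSEQ_real)
  have wpos: "0 \<le> w u" for u unfolding w_def by simp
  have "(\<integral>\<^sup>+u. ennreal (norm (w u)) \<partial>M) \<le> (\<integral>\<^sup>+u. ennreal (g u) \<partial>M)"
  proof (rule nn_integral_mono)
    fix u
    have "ennreal (w u) \<le> W u" unfolding w_def by (simp add: ennreal_enn2real_if)
    then show "ennreal (norm (w u)) \<le> ennreal (g u)" using Wg[of u] wpos[of u] by simp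
  qed
  then have wi: "integrable M w" using wm fin by (intro integrableI_bounded) (auto intro: le_less_trans)
  have l2: "AE x in M. (\<lambda>i. s i x) \<longlonglongrightarrow> f x" using lim by simp
  have b2: "\<And>i. AE x in M. norm (s i x) \<le> w x" using sw by simp
  show "integrable M f" "(\<lambda>i. integral\<^sup>L M (s i)) \<longlonglongrightarrow> integral\<^sup>L M f"
    using integrable_dominated_convergence[OF fm sm wi l2 b2] integral_dominated_convergence[OF fm sm wi l2 b2]
    by auto
qed

lemma deriv_measurable:
  fixes f f' :: "real \<Rightarrow> real \<Rightarrow> real"
  assumes fm: "(\<lambda>p. f (fst p) (snd p)) \<in> borel_measurable borel"
    and d: "\<And>t u. ((\<lambda>s. f s u) has_real_derivative f' t u) (at t)"
  shows "(\<lambda>p. f' (fst p) (snd p)) \<in> borel_measurable borel"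
proof (rule borel_measurable_LIMSEQ_real)
  fix p :: "real \<times> real"
  let ?X = "\<lambda>i. fst p + 1 / Suc i"
  have "?X \<longlonglongrightarrow> fst p + 0" by (intro tendsto_intros LIMSEQ_inverse_real_of_nat[unfolded inverse_eq_divide])
  then have "(\<lambda>i. (f (?X i) (snd p) - f (fst p) (snd p)) / (?X i - fst p)) \<longlonglongrightarrow> f' (fst p) (snd p)"
    by (intro deriv_seq[OF d]) auto
  then show "(\<lambda>i. (f (fst p + 1 / Suc i) (snd p) - f (fst p) (snd p)) * Suc i) \<longlonglongrightarrow> f' (fst p) (snd p)"
    by simp
next
  fix i :: nat
  have a: "(\<lambda>p. f (fst ((\<lambda>p. (fst p + 1 / Suc i, snd p)) p)) (snd ((\<lambda>p. (fst p + 1 / Suc i, snd p)) p))) \<in> borel_measurable borel"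
    by (rule measurable_compose[OF _ fm]) (simp add: borel_prod[symmetric])
  show "(\<lambda>p. (f (fst p + 1 / Suc i) (snd p) - f (fst p) (snd p)) * Suc i) \<in> borel_measurable borel"
    using a fm by simp
qed

lemma deriv_integral:
  fixes k k' :: "real \<Rightarrow> real \<Rightarrow> real" and K :: "real \<Rightarrow> real"
  assumes ki: "\<And>t. integrable lborel (k t)"
    and d: "\<And>t u. ((\<lambda>s. k s u) has_real_derivative k' t u) (at t)"
    and bd: "\<And>t u. \<bar>k' t u\<bar> \<le> K u"
    and fin: "(\<integral>\<^sup>+u. ennreal (K u) \<partial>lborel) < \<infinity>"
  shows "((\<lambda>t. \<integral>u. k t u \<partial>lborel) has_real_derivative (\<integral>u. k' t u \<partial>lborel)) (at t)"
proof -
  have "((\<lambda>y. ((\<integral>u. k y u \<partial>lborel) - (\<integral>u. k t u \<partial>lborel)) / (y - t)) \<longlongrightarrow> (\<integral>u. k' t u \<partial>lborel)) (at t)"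
    unfolding tendsto_at_iff_sequentially
  proof (intro allI impI)
    fix X :: "nat \<Rightarrow> real" assume X: "\<forall>i. X i \<in> UNIV - {t}" "X \<longlonglongrightarrow> t"
    define s where "s i u = (k (X i) u - k t u) / (X i - t)" for i u
    have sm: "s i \<in> borel_measurable lborel" for i
      unfolding s_def using ki[of "X i"] ki[of t] by measurable
    have lim: "(\<lambda>i. s i u) \<longlonglongrightarrow> k' t u" for u
      unfolding s_def using X by (intro deriv_seq[OF d]) auto
    have sb: "\<bar>s i u\<bar> \<le> K u" for i u
    proof -
      have "\<bar>k (X i) u - k t u\<bar> \<le> K u * \<bar>X i - t\<bar>"
        by (rule mvt_bound[OF d bd])
      then show ?thesis using X(1) unfolding s_def by (simp add: abs_divide divide_le_eq)
    qed
    have "(\<lambda>i. integral\<^sup>L lborel (s i)) \<longlonglongrightarrow> (\<integral>u. k' t u \<partial>lborel)"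
      using dc_nn(2)[OF sm lim sb fin] .
    moreover have "integral\<^sup>L lborel (s i) = ((\<integral>u. k (X i) u \<partial>lborel) - (\<integral>u. k t u \<partial>lborel)) / (X i - t)" for i
      unfolding s_def using ki by (simp add: integral_diff)
    ultimately show "((\<lambda>y. ((\<integral>u. k y u \<partial>lborel) - (\<integral>u. k t u \<partial>lborel)) / (y - t)) \<circ> X) \<longlonglongrightarrow> (\<integral>u. k' t u \<partial>lborel)"
      by (simp add: o_def)
  qed
  then show ?thesis by (simp add: has_field_derivative_iff)
qed



context
  fixes P :: "'a measure" and mu v :: "'a \<Rightarrow> real" and b b1 b2 :: "real \<Rightarrow> real \<Rightarrow> real"
    and bb0 bb1 bb2 :: "real \<Rightarrow> real" and B :: real
  assumes Pp: "prob_space P"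
  and dist: "distributed P lborel (\<lambda>z. (mu z, v z)) (\<lambda>p. ennreal (b (fst p) (snd p)))"
  and bpos: "\<And>t u. 0 \<le> b t u"
  and d1: "\<And>t u. ((\<lambda>s. b s u) has_real_derivative b1 t u) (at t)"
  and d2: "\<And>t u. ((\<lambda>s. b1 s u) has_real_derivative b2 t u) (at t)"
  and bd0: "\<And>t u. b t u \<le> bb0 u" and bd1: "\<And>t u. \<bar>b1 t u\<bar> \<le> bb1 u" and bd2: "\<And>t u. \<bar>b2 t u\<bar> \<le> bb2 u"
  and I0: "(\<integral>\<^sup>+u. ennreal (bb0 u) \<partial>lborel) \<le> ennreal B"
  and I1: "(\<integral>\<^sup>+u. ennreal (bb1 u) \<partial>lborel) \<le> ennreal B"
  and I2: "(\<integral>\<^sup>+u. ennreal (bb2 u) \<partial>lborel) \<le> ennreal B"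
  and J1: "(\<integral>\<^sup>+u. ennreal (\<bar>u\<bar> * bb1 u) \<partial>lborel) \<le> ennreal B"
  and J2: "(\<integral>\<^sup>+u. ennreal (\<bar>u\<bar> * bb2 u) \<partial>lborel) \<le> ennreal B"
  and Bpos: "0 \<le> B"
begin

lemma bm: "(\<lambda>p. b (fst p) (snd p)) \<in> borel_measurable borel"
proof -
  have "(\<lambda>p. ennreal (b (fst p) (snd p))) \<in> borel_measurable borel"
    using distributed_borel_measurable[OF dist] by simp
  then have "(\<lambda>p. enn2real (ennreal (b (fst p) (snd p)))) \<in> borel_measurable borel" by simp
  then show ?thesis using bpos by simp
qed

lemma b1m: "(\<lambda>p. b1 (fst p) (snd p)) \<in> borel_measurable borel"
  by (rule deriv_measurable[OF bm d1])

lemma pair_comp: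
  fixes h :: "real \<Rightarrow> real \<Rightarrow> real"
  assumes "(\<lambda>p. h (fst p) (snd p)) \<in> borel_measurable borel"
    and f: "f \<in> borel_measurable M" and g: "g \<in> borel_measurable M"
  shows "(\<lambda>x. h (f x) (g x)) \<in> borel_measurable M"
  using measurable_compose[OF measurable_Pair[OF f g], of "\<lambda>p. h (fst p) (snd p)"] assms(1)
  by (simp add: borel_prod)

lemma bmc: "(\<lambda>u. b (t - c * u) u) \<in> borel_measurable lborel"
  by (rule pair_comp[OF bm]) auto

lemma b1mc: "(\<lambda>u. b1 (t - c * u) u) \<in> borel_measurable lborel"
  by (rule pair_comp[OF b1m]) auto

lemma fin: "(\<integral>\<^sup>+u. ennreal (bb0 u) \<partial>lborel) < \<top>" "(\<integral>\<^sup>+u. ennreal (bb1 u) \<partial>lborel) < \<top>"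
   "(\<integral>\<^sup>+u. ennreal (bb2 u) \<partial>lborel) < \<top>"
  using I0 I1 I2 by (auto simp: le_less_trans)

lemma finI: "(\<integral>\<^sup>+u. ennreal (bb0 u) \<partial>lborel) < \<infinity>" "(\<integral>\<^sup>+u. ennreal (bb1 u) \<partial>lborel) < \<infinity>"
   "(\<integral>\<^sup>+u. ennreal (bb2 u) \<partial>lborel) < \<infinity>"
  using fin by simp_all

lemma int_b: "integrable lborel (\<lambda>u. b (t - c * u) u)"
  by (rule integrable_nn_bound[OF bmc _ finI(1)]) (use bpos bd0 in auto)

lemma int_b1: "integrable lborel (\<lambda>u. b1 (t - c * u) u)"
  by (rule integrable_nn_bound[OF b1mc bd1 finI(2)])

definition G where "G c t = (\<integral>u. b (t - c * u) u \<partial>lborel)"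
definition G1 where "G1 c t = (\<integral>u. b1 (t - c * u) u \<partial>lborel)"

lemma chain:
  fixes h h' :: "real \<Rightarrow> real \<Rightarrow> real"
  assumes "\<And>t u. ((\<lambda>s. h s u) has_real_derivative h' t u) (at t)"
  shows "((\<lambda>s. h (s - c * u) u) has_real_derivative h' (t - c * u) u) (at t)"
proof -
  have "((\<lambda>s. h s u) \<circ> (\<lambda>s. s - c * u) has_real_derivative h' (t - c * u) u * 1) (at t)"
    by (intro DERIV_chain assms derivative_eq_intros) auto
  then show ?thesis by (simp add: o_def)
qed

lemma dG: "(G c has_real_derivative G1 c t) (at t)"
  unfolding G_def[abs_def] G1_def
  by (rule deriv_integral[where k="\<lambda>t u. b (t - c*u) u" and k'="\<lambda>t u. b1 (t - c*u) u" and K=bb1])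
     (auto intro: int_b chain[OF d1] bd1 fin(2))

lemma dG1: "(G1 c has_real_derivative (\<integral>u. b2 (t - c * u) u \<partial>lborel)) (at t)"
  unfolding G1_def[abs_def]
  by (rule deriv_integral[where k="\<lambda>t u. b1 (t - c*u) u" and k'="\<lambda>t u. b2 (t - c*u) u" and K=bb2])
     (auto intro: int_b1 chain[OF d2] bd2 fin(3))

lemma contG: "continuous_on UNIV (G c)"
  using dG by (intro continuous_at_imp_continuous_on ballI DERIV_isCont) blast

lemma cdf_nn:
  "emeasure P {z \<in> space P. mu z + c * v z \<le> t} = (\<integral>\<^sup>+y. ennreal (G c y) * indicator {..t} y \<partial>lborel)"
proof -
  let ?Y = "\<lambda>z. (mu z, v z)"
  define A where "A = {p::real\<times>real. fst p + c * snd p \<le> t}"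
  have "closed A" unfolding A_def by (intro closed_Collect_le continuous_intros)
  then have Am: "A \<in> sets borel" by (rule borel_closed)
  have Ym: "?Y \<in> measurable P lborel" using distributed_measurable[OF dist] .
  have bY: "(\<lambda>p. ennreal (b (fst p) (snd p))) \<in> borel_measurable borel" using bm by measurable
  have "{z \<in> space P. mu z + c * v z \<le> t} = ?Y -` A \<inter> space P" unfolding A_def by auto
  then have "emeasure P {z \<in> space P. mu z + c * v z \<le> t} = emeasure (distr P lborel ?Y) A"
    using Ym Am by (simp add: emeasure_distr)
  also have "\<dots> = emeasure (density lborel (\<lambda>p. ennreal (b (fst p) (snd p)))) A"
    using distributed_distr_eq_density[OF dist] by simp
  also have "\<dots> = (\<integral>\<^sup>+p. ennreal (b (fst p) (snd p)) * indicator A p \<partial>lborel)"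
    using Am bY by (subst emeasure_density) auto
  also have "\<dots> = (\<integral>\<^sup>+p. ennreal (b (fst p) (snd p)) * indicator A p \<partial>(lborel \<Otimes>\<^sub>M lborel))"
    by (simp add: lborel_prod)
  also have "\<dots> = (\<integral>\<^sup>+u. \<integral>\<^sup>+s. ennreal (b s u) * indicator A (s, u) \<partial>lborel \<partial>lborel)"
    using Am bY by (subst lborel_pair.nn_integral_snd[symmetric]) (auto simp: lborel_prod)
  also have "\<dots> = (\<integral>\<^sup>+u. \<integral>\<^sup>+y. ennreal (b (y - c * u) u) * indicator {..t} y \<partial>lborel \<partial>lborel)"
  proof (rule nn_integral_cong)
    fix u :: real
    have m: "(\<lambda>s. ennreal (b s u) * indicator A (s, u)) \<in> borel_measurable borel"
    proof -
      have m1: "(\<lambda>s. b s u) \<in> borel_measurable borel" using pair_comp[OF bm, of "\<lambda>s. s" borel "\<lambda>s. u"] by simp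
      have e: "(\<lambda>s. ennreal (b s u) * indicator A (s, u)) = (\<lambda>s. ennreal (b s u) * indicator {..t - c * u} s)"
        by (auto simp: A_def indicator_def algebra_simps fun_eq_iff)
      show ?thesis unfolding e using m1 by measurable
    qed
    have "(\<integral>\<^sup>+s. ennreal (b s u) * indicator A (s, u) \<partial>lborel) =
        ennreal \<bar>1::real\<bar> * (\<integral>\<^sup>+y. ennreal (b (- c * u + 1 * y) u) * indicator A (- c * u + 1 * y, u) \<partial>lborel)"
      by (rule nn_integral_real_affine[OF m]) simp
    also have "\<dots> = (\<integral>\<^sup>+y. ennreal (b (y - c * u) u) * indicator {..t} y \<partial>lborel)"
      by (auto simp: A_def indicator_def algebra_simps intro!: nn_integral_cong)
    finally show "(\<integral>\<^sup>+s. ennreal (b s u) * indicator A (s, u) \<partial>lborel) = (\<integral>\<^sup>+y. ennreal (b (y - c * u) u) * indicator {..t} y \<partial>lborel)" .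
  qed
  also have "\<dots> = (\<integral>\<^sup>+y. \<integral>\<^sup>+u. ennreal (b (y - c * u) u) * indicator {..t} y \<partial>lborel \<partial>lborel)"
  proof (rule lborel_pair.Fubini')
    show "case_prod (\<lambda>y u. ennreal (b (y - c * u) u) * indicator {..t} y) \<in> borel_measurable (lborel \<Otimes>\<^sub>M lborel)"
    proof -
      have "(\<lambda>x::real\<times>real. b (fst x - c * snd x) (snd x)) \<in> borel_measurable borel"
        by (rule pair_comp[OF bm]) (auto intro!: borel_measurable_continuous_onI continuous_intros)
      moreover have "(\<lambda>x::real\<times>real. indicator {..t} (fst x) :: ennreal) \<in> borel_measurable borel"
        by (rule measurable_compose[OF _ borel_measurable_indicator])
           (auto intro!: borel_measurable_continuous_onI continuous_intros)
      ultimately show ?thesis unfolding split_beta' lborel_prod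
        by (auto intro!: borel_measurable_times_ennreal)
    qed
  qed
  also have "\<dots> = (\<integral>\<^sup>+y. ennreal (G c y) * indicator {..t} y \<partial>lborel)"
  proof (rule nn_integral_cong)
    fix y :: real
    have "(\<integral>\<^sup>+u. ennreal (b (y - c * u) u) * indicator {..t} y \<partial>lborel) = (\<integral>\<^sup>+u. ennreal (b (y - c * u) u) \<partial>lborel) * indicator {..t} y"
      using bmc by (intro nn_integral_multc) auto
    also have "(\<integral>\<^sup>+u. ennreal (b (y - c * u) u) \<partial>lborel) = ennreal (G c y)"
      unfolding G_def using int_b bpos by (intro nn_integral_eq_integral) auto
    finally show "(\<integral>\<^sup>+u. ennreal (b (y - c * u) u) * indicator {..t} y \<partial>lborel) = ennreal (G c y) * indicator {..t} y" .
  qed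
  finally show ?thesis .
qed

definition N where "N c t = (\<integral>\<^sup>+y. ennreal (G c y) * indicator {..t} y \<partial>lborel)"

lemma N_fin: "N c t < \<top>"
proof -
  have "N c t \<le> 1" unfolding N_def cdf_nn[symmetric] using prob_space.emeasure_le_1[OF Pp] .
  then show ?thesis by (simp add: le_less_trans)
qed

lemma cdf_N: "cdf_of P (\<lambda>z. mu z + c * v z) t = enn2real (N c t)"
  unfolding cdf_of_def measure_def N_def cdf_nn ..

lemma G_nonneg: "0 \<le> G c t"
  unfolding G_def using bpos by (intro integral_nonneg_AE) auto

lemma N_split:
  assumes "s \<le> u"
  shows "N c u = N c s + ennreal (LBINT y=s..u. G c y)"
proof -
  have ind: "indicator {..u} y = (indicator {..s} y + indicator {s<..u} y :: ennreal)" for y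
    using assms by (auto simp: indicator_def)
  have Gm: "G c \<in> borel_measurable borel" by (rule borel_measurable_continuous_onI[OF contG])
  have "N c u = (\<integral>\<^sup>+y. ennreal (G c y) * indicator {..s} y + ennreal (G c y) * indicator {s<..u} y \<partial>lborel)"
    unfolding N_def by (intro nn_integral_cong) (simp add: ind distrib_left)
  also have "\<dots> = N c s + (\<integral>\<^sup>+y. ennreal (G c y) * indicator {s<..u} y \<partial>lborel)"
    unfolding N_def using Gm by (intro nn_integral_add) auto
  also have "(\<integral>\<^sup>+y. ennreal (G c y) * indicator {s<..u} y \<partial>lborel) = (\<integral>\<^sup>+y. ennreal (indicator {s<..u} y *\<^sub>R G c y) \<partial>lborel)"
    by (intro nn_integral_cong) (auto simp: indicator_def)
  also have "\<dots> = ennreal (\<integral>y. indicator {s<..u} y *\<^sub>R G c y \<partial>lborel)"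
  proof (rule nn_integral_eq_integral)
    have "set_integrable lborel {s..u} (G c)"
      by (rule borel_integrable_atLeastAtMost') (rule continuous_on_subset[OF contG], simp)
    then have "set_integrable lborel {s<..u} (G c)"
      by (rule set_integrable_subset) auto
    then show "integrable lborel (\<lambda>y. indicator {s<..u} y *\<^sub>R G c y)" unfolding set_integrable_def .
  qed (auto simp: G_nonneg indicator_def)
  also have "(\<integral>y. indicator {s<..u} y *\<^sub>R G c y \<partial>lborel) = (LBINT y=s..u. G c y)"
    using assms by (simp add: interval_integral_Ioc set_lebesgue_integral_def)
  finally show ?thesis .
qed

lemma dens: "dens_of P (\<lambda>z. mu z + c * v z) = G c"
proof
  fix t :: real
  let ?F = "cdf_of P (\<lambda>z. mu z + c * v z)"
  have eq: "?F u = ?F (t - 1) + (LBINT y=(t-1)..u. G c y)" if "t - 1 \<le> u" for u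
  proof -
    have nn: "0 \<le> (LBINT y=(t-1)..u. G c y)"
      using that unfolding interval_integral_Ioc[OF that] set_lebesgue_integral_def
      by (intro integral_nonneg_AE) (auto simp: G_nonneg indicator_def)
    show ?thesis unfolding cdf_N N_split[OF that]
      using N_fin nn by (simp add: enn2real_plus)
  qed
  have "((\<lambda>u. LBINT y=(t-1)..u. G c y) has_vector_derivative G c t) (at t within {t-1..t+1})"
    by (rule interval_integral_FTC2) (auto intro: continuous_on_subset[OF contG])
  then have "((\<lambda>u. LBINT y=(t-1)..u. G c y) has_real_derivative G c t) (at t)"
    by (simp add: at_within_Icc_at has_real_derivative_iff_has_vector_derivative)
  then have "((\<lambda>u. ?F (t - 1) + (LBINT y=(t-1)..u. G c y)) has_real_derivative G c t) (at t)"
    using DERIV_add[OF DERIV_const[of "?F (t - 1)" "at t"]] by simp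
  then have "(?F has_real_derivative G c t) (at t)"
  proof (rule has_field_derivative_transform_within_open[where S="{t-1<..<t+1}"])
    fix x assume "x \<in> {t-1<..<t+1}"
    then have "t - 1 \<le> x" by simp
    from eq[OF this] show "?F (t - 1) + (LBINT y=(t-1)..x. G c y) = ?F x" by simp
  qed auto
  then show "dens_of P (\<lambda>z. mu z + c * v z) t = G c t"
    unfolding dens_of_def by (rule DERIV_imp_deriv)
qed

lemma dens_deriv: "dens_deriv P (\<lambda>z. mu z + c * v z) = G1 c"
  unfolding dens_deriv_def dens by (intro ext DERIV_imp_deriv dG)

lemma gen_diff:
  fixes h h' :: "real \<Rightarrow> real \<Rightarrow> real" and H :: "real \<Rightarrow> real"
  assumes hm: "\<And>t c. (\<lambda>u. h (t - c * u) u) \<in> borel_measurable lborel"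
    and hi: "\<And>t c. integrable lborel (\<lambda>u. h (t - c * u) u)"
    and hd: "\<And>t u. ((\<lambda>s. h s u) has_real_derivative h' t u) (at t)"
    and hb: "\<And>t u. \<bar>h' t u\<bar> \<le> H u"
    and HI: "(\<integral>\<^sup>+u. ennreal (\<bar>u\<bar> * H u) \<partial>lborel) \<le> ennreal B"
    and HI0: "(\<integral>\<^sup>+u. ennreal (H u) \<partial>lborel) \<le> ennreal B"
  shows "\<bar>(\<integral>u. h (t - c * u) u \<partial>lborel) - (\<integral>u. h (s - 0 * u) u \<partial>lborel)\<bar> \<le> B * \<bar>c\<bar> + B * \<bar>t - s\<bar>"
proof -
  have a: "(\<integral>u. h (t - c * u) u \<partial>lborel) - (\<integral>u. h (t - 0 * u) u \<partial>lborel) = (\<integral>u. h (t - c * u) u - h (t - 0 * u) u \<partial>lborel)"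
    by (rule Bochner_Integration.integral_diff[symmetric, OF hi hi])
  have "\<bar>\<integral>u. h (t - c * u) u - h (t - 0 * u) u \<partial>lborel\<bar> \<le> \<bar>c\<bar> * B"
  proof (rule int_bound[where g="\<lambda>u. \<bar>u\<bar> * H u", OF _ _ _ HI Bpos])
    show "(\<lambda>u. h (t - c * u) u - h (t - 0 * u) u) \<in> borel_measurable lborel"
      using hm[of t c] hm[of t 0] by measurable
    fix u
    have "\<bar>h (t - c * u) u - h (t - 0 * u) u\<bar> \<le> H u * \<bar>(t - c * u) - (t - 0 * u)\<bar>"
      by (rule mvt_bound[where phi="\<lambda>s. h s u" and phi'="\<lambda>s. h' s u", OF hd hb])
    also have "\<dots> = \<bar>c\<bar> * (\<bar>u\<bar> * H u)" by (simp add: abs_mult)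
    finally show "\<bar>h (t - c * u) u - h (t - 0 * u) u\<bar> \<le> \<bar>c\<bar> * (\<bar>u\<bar> * H u)" .
  qed simp
  moreover have b: "(\<integral>u. h (t - 0 * u) u \<partial>lborel) - (\<integral>u. h (s - 0 * u) u \<partial>lborel) = (\<integral>u. h (t - 0 * u) u - h (s - 0 * u) u \<partial>lborel)"
    by (rule Bochner_Integration.integral_diff[symmetric, OF hi hi])
  have "\<bar>\<integral>u. h (t - 0 * u) u - h (s - 0 * u) u \<partial>lborel\<bar> \<le> \<bar>t - s\<bar> * B"
  proof (rule int_bound[where g="H", OF _ _ _ HI0 Bpos])
    show "(\<lambda>u. h (t - 0 * u) u - h (s - 0 * u) u) \<in> borel_measurable lborel"
      using hm[of t 0] hm[of s 0] by measurable
    fix u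
    have "\<bar>h (t - 0 * u) u - h (s - 0 * u) u\<bar> \<le> H u * \<bar>(t - 0 * u) - (s - 0 * u)\<bar>"
      by (rule mvt_bound[where phi="\<lambda>s. h s u" and phi'="\<lambda>s. h' s u", OF hd hb])
    then show "\<bar>h (t - 0 * u) u - h (s - 0 * u) u\<bar> \<le> \<bar>t - s\<bar> * H u" by (simp add: mult.commute)
  qed simp
  ultimately show ?thesis using a b by (simp add: abs_diff_le_iff abs_le_iff mult.commute)
qed

lemma core:
  "\<bar>dens_of P (\<lambda>z. mu z + c * v z) t - dens_of P mu s\<bar> \<le> B * \<bar>c\<bar> + B * \<bar>t - s\<bar>"
  "\<bar>dens_deriv P (\<lambda>z. mu z + c * v z) t - dens_deriv P mu s\<bar> \<le> B * \<bar>c\<bar> + B * \<bar>t - s\<bar>"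
proof -
  have mu: "mu = (\<lambda>z. mu z + 0 * v z)" by simp
  show "\<bar>dens_of P (\<lambda>z. mu z + c * v z) t - dens_of P mu s\<bar> \<le> B * \<bar>c\<bar> + B * \<bar>t - s\<bar>"
    apply (subst (2) mu)
    unfolding dens G_def
    by (rule gen_diff[OF bmc int_b d1 bd1 J1 I1])
  show "\<bar>dens_deriv P (\<lambda>z. mu z + c * v z) t - dens_deriv P mu s\<bar> \<le> B * \<bar>c\<bar> + B * \<bar>t - s\<bar>"
    apply (subst (2) mu)
    unfolding dens_deriv G1_def
    by (rule gen_diff[OF b1mc int_b1 d2 bd2 J2 I2])
qed

end


theorem lemma1:
  fixes M :: "'w measure" and P :: "'a::euclidean_space measure"
    and mu pi :: "'a \<Rightarrow> real" and mut pit :: "nat \<Rightarrow> 'w \<Rightarrow> 'a \<Rightarrow> real"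
    and a :: "nat \<Rightarrow> real" and xs :: "nat \<Rightarrow> real" and x :: real
  assumes "prob_space M" and "prob_space P" and "sets P = sets borel"
    and "mu \<in> borel_measurable P" and "pi \<in> borel_measurable P"
    and "\<forall>m. \<forall>\<omega>\<in>space M. mut m \<omega> \<in> borel_measurable P \<and> pit m \<omega> \<in> borel_measurable P"
    and "\<forall>m. 0 < a m" and "a \<longlonglongrightarrow> 0"
    and "bigO_P M (\<lambda>m \<omega>. sup_norm P (\<lambda>z. mut m \<omega> z - mu z)) a"
    and "bigO_P M (\<lambda>m \<omega>. sup_norm P (\<lambda>z. pit m \<omega> z - pi z)) a"
    and "AE \<omega> in M. \<exists>m0 (B::real) (bb :: nat \<Rightarrow> nat \<Rightarrow> real \<Rightarrow> real). \<forall>m\<ge>m0.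
           (\<forall>i\<le>2. \<forall>u. 0 \<le> bb m i u) \<and>
           (\<forall>r::nat\<le>3. \<forall>i\<le>2. (\<integral>\<^sup>+ u. ennreal (\<bar>u\<bar> ^ r * bb m i u) \<partial>lborel) \<le> ennreal B) \<and>
           (\<exists>b b1 b2 :: real \<Rightarrow> real \<Rightarrow> real.
              distributed P lborel (\<lambda>z. (mu z, (mut m \<omega> z - mu z) / a m))
                (\<lambda>p. ennreal (b (fst p) (snd p))) \<and>
              (\<forall>t u. 0 \<le> b t u) \<and>
              (\<forall>t u. ((\<lambda>s. b s u) has_real_derivative b1 t u) (at t)) \<and>
              (\<forall>t u. ((\<lambda>s. b1 s u) has_real_derivative b2 t u) (at t)) \<and>
              (\<forall>t u. b t u \<le> bb m 0 u \<and> \<bar>b1 t u\<bar> \<le> bb m 1 u \<and> \<bar>b2 t u\<bar> \<le> bb m 2 u))"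
    and "xs \<longlonglongrightarrow> x"
  shows "AE \<omega> in M. (\<lambda>m. dens_of P (mut m \<omega>) (xs m)) \<longlonglongrightarrow> dens_of P mu x \<and>
                     (\<lambda>m. dens_deriv P (mut m \<omega>) (xs m)) \<longlonglongrightarrow> dens_deriv P mu x"
proof -
  have a_pos: "\<And>m. 0 < a m" using assms(7) by blast
  show ?thesis
  proof (rule eventually_mono[OF assms(11)])
    fix \<omega>
    assume "\<exists>m0 (B::real) (bb :: nat \<Rightarrow> nat \<Rightarrow> real \<Rightarrow> real). \<forall>m\<ge>m0.
           (\<forall>i\<le>2. \<forall>u. 0 \<le> bb m i u) \<and>
           (\<forall>r::nat\<le>3. \<forall>i\<le>2. (\<integral>\<^sup>+ u. ennreal (\<bar>u\<bar> ^ r * bb m i u) \<partial>lborel) \<le> ennreal B) \<and>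
           (\<exists>b b1 b2 :: real \<Rightarrow> real \<Rightarrow> real.
              distributed P lborel (\<lambda>z. (mu z, (mut m \<omega> z - mu z) / a m))
                (\<lambda>p. ennreal (b (fst p) (snd p))) \<and>
              (\<forall>t u. 0 \<le> b t u) \<and>
              (\<forall>t u. ((\<lambda>s. b s u) has_real_derivative b1 t u) (at t)) \<and>
              (\<forall>t u. ((\<lambda>s. b1 s u) has_real_derivative b2 t u) (at t)) \<and>
              (\<forall>t u. b t u \<le> bb m 0 u \<and> \<bar>b1 t u\<bar> \<le> bb m 1 u \<and> \<bar>b2 t u\<bar> \<le> bb m 2 u))"
    then obtain m0 B and bb :: "nat \<Rightarrow> nat \<Rightarrow> real \<Rightarrow> real" where H: "\<forall>m\<ge>m0.
           (\<forall>i\<le>2. \<forall>u. 0 \<le> bb m i u) \<and>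
           (\<forall>r::nat\<le>3. \<forall>i\<le>2. (\<integral>\<^sup>+ u. ennreal (\<bar>u\<bar> ^ r * bb m i u) \<partial>lborel) \<le> ennreal B) \<and>
           (\<exists>b b1 b2 :: real \<Rightarrow> real \<Rightarrow> real.
              distributed P lborel (\<lambda>z. (mu z, (mut m \<omega> z - mu z) / a m))
                (\<lambda>p. ennreal (b (fst p) (snd p))) \<and>
              (\<forall>t u. 0 \<le> b t u) \<and>
              (\<forall>t u. ((\<lambda>s. b s u) has_real_derivative b1 t u) (at t)) \<and>
              (\<forall>t u. ((\<lambda>s. b1 s u) has_real_derivative b2 t u) (at t)) \<and>
              (\<forall>t u. b t u \<le> bb m 0 u \<and> \<bar>b1 t u\<bar> \<le> bb m 1 u \<and> \<bar>b2 t u\<bar> \<le> bb m 2 u))"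
      by blast
    define B' where "B' = max B 0"
    have B'pos: "0 \<le> B'" unfolding B'_def by simp
    have key: "\<bar>dens_of P (mut m \<omega>) (xs m) - dens_of P mu x\<bar> \<le> B' * a m + B' * \<bar>xs m - x\<bar> \<and>
               \<bar>dens_deriv P (mut m \<omega>) (xs m) - dens_deriv P mu x\<bar> \<le> B' * a m + B' * \<bar>xs m - x\<bar>"
      if mm: "m \<ge> m0" for m
    proof -
      have Hm: "(\<forall>i\<le>2. \<forall>u. 0 \<le> bb m i u)"
        "\<forall>r::nat\<le>3. \<forall>i\<le>2. (\<integral>\<^sup>+ u. ennreal (\<bar>u\<bar> ^ r * bb m i u) \<partial>lborel) \<le> ennreal B"
        using H mm by blast+
      obtain b b1 b2 :: "real \<Rightarrow> real \<Rightarrow> real" where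
        dist: "distributed P lborel (\<lambda>z. (mu z, (mut m \<omega> z - mu z) / a m)) (\<lambda>p. ennreal (b (fst p) (snd p)))"
        and bpos: "\<And>t u. 0 \<le> b t u"
        and d1: "\<And>t u. ((\<lambda>s. b s u) has_real_derivative b1 t u) (at t)"
        and d2: "\<And>t u. ((\<lambda>s. b1 s u) has_real_derivative b2 t u) (at t)"
        and bds: "\<And>t u. b t u \<le> bb m 0 u \<and> \<bar>b1 t u\<bar> \<le> bb m 1 u \<and> \<bar>b2 t u\<bar> \<le> bb m 2 u"
        using H mm by blast
      have EB: "ennreal B \<le> ennreal B'" unfolding B'_def by (intro ennreal_leI) simp
      have IB: "(\<integral>\<^sup>+ u. ennreal (\<bar>u\<bar> ^ r * bb m i u) \<partial>lborel) \<le> ennreal B'" if "r \<le> 3" "i \<le> 2" for r i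
        using Hm(2) that EB by (meson order_trans)
      have I0: "(\<integral>\<^sup>+ u. ennreal (bb m 0 u) \<partial>lborel) \<le> ennreal B'" using IB[of 0 0] by simp
      have I1: "(\<integral>\<^sup>+ u. ennreal (bb m 1 u) \<partial>lborel) \<le> ennreal B'" using IB[of 0 1] by simp
      have I2: "(\<integral>\<^sup>+ u. ennreal (bb m 2 u) \<partial>lborel) \<le> ennreal B'" using IB[of 0 2] by simp
      have J1: "(\<integral>\<^sup>+ u. ennreal (\<bar>u\<bar> * bb m 1 u) \<partial>lborel) \<le> ennreal B'" using IB[of 1 1] by simp
      have J2: "(\<integral>\<^sup>+ u. ennreal (\<bar>u\<bar> * bb m 2 u) \<partial>lborel) \<le> ennreal B'" using IB[of 1 2] by simp
      have eq: "mut m \<omega> = (\<lambda>z. mu z + a m * ((mut m \<omega> z - mu z) / a m))"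
        using a_pos[of m] by (auto simp: fun_eq_iff)
      note c = core[OF assms(2) dist bpos d1 d2 conjunct1[OF bds] conjunct1[OF conjunct2[OF bds]]
          conjunct2[OF conjunct2[OF bds]] I0 I1 I2 J1 J2 B'pos, of "a m" "xs m" x]
      show ?thesis using c a_pos[of m] by (subst (1 2) eq) simp
    qed
    have lim0: "(\<lambda>m. B' * a m + B' * \<bar>xs m - x\<bar>) \<longlonglongrightarrow> B' * 0 + B' * \<bar>x - x\<bar>"
      by (intro tendsto_intros assms(8) assms(12))
    then have lim: "(\<lambda>m. B' * a m + B' * \<bar>xs m - x\<bar>) \<longlonglongrightarrow> 0" by simp
    have "(\<lambda>m. dens_of P (mut m \<omega>) (xs m) - dens_of P mu x) \<longlonglongrightarrow> 0"
      by (rule Lim_null_comparison[OF _ lim]) (use key in \<open>auto simp: eventually_sequentially\<close>)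
    moreover have "(\<lambda>m. dens_deriv P (mut m \<omega>) (xs m) - dens_deriv P mu x) \<longlonglongrightarrow> 0"
      by (rule Lim_null_comparison[OF _ lim]) (use key in \<open>auto simp: eventually_sequentially\<close>)
    ultimately show "(\<lambda>m. dens_of P (mut m \<omega>) (xs m)) \<longlonglongrightarrow> dens_of P mu x \<and>
                     (\<lambda>m. dens_deriv P (mut m \<omega>) (xs m)) \<longlonglongrightarrow> dens_deriv P mu x"
      by (simp add: Lim_null[of "\<lambda>m. dens_of P (mut m \<omega>) (xs m)"] Lim_null[of "\<lambda>m. dens_deriv P (mut m \<omega>) (xs m)"])
  qed
qed


end
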